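(* Let $1\le j<n$ with $\gcd(n,j)=1$, $k=n-j$, let $a\in\overline L^\times$, and let $X\in\overline L$ satisfy $X^{q^k-1}=a$. Then the elements $g\in\overline L$ satisfying $$\frac{1}{a}\,g^{q^k}-\frac{1}{a^{q^j}}\,g-a^{q^n-1}+1=0$$ are exactly $$g=\frac{X^{q^n-1}+c}{X^{q^j-1}},\qquad c\in\mathbb{F}_{q^k},$$ and for such $g$ the element $h=-a^{q^n}+a+g^{q^k}$ equals $$h=\frac{X^{q^n-1}+c}{X^{q^n-q^k}}.$$
   Context: $q$ is a prime power and $\overline L$ is an algebraically closed field containing $\mathbb{F}_q$. *)

theory Defs
  imports "HOL-Computational_Algebra.Computational_Algebra"
begin

text \<open>The subfield F_{q^m} of a field of characteristic p (q a power of p),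
  realised as the set of roots of x^(q^m) - x.\<close>
definition Fq_sub :: "nat \<Rightarrow> nat \<Rightarrow> 'a::field set" where
  "Fq_sub q m = {c. c ^ (q ^ m) = c}"

end

theory Submission
  imports Defs
begin

lemma frob_gen:
  fixes x y :: "'a::field"
  assumes "prime p" "CHAR('a) = p" "Q = p ^ m"
  shows "(x + y) ^ Q = x ^ Q + y ^ Q" "(x - y) ^ Q = x ^ Q - y ^ Q"
proof -
  show 1: "\<And>x y::'a. (x + y) ^ Q = x ^ Q + y ^ Q"
    using assms by (intro freshmans_dream') auto
  have "(x - y + y) ^ Q = (x - y) ^ Q + y ^ Q" by (rule 1)
  then show "(x - y) ^ Q = x ^ Q - y ^ Q" by simp
qed

lemma lin_helper:
  fixes x y w :: "'a::field"
  assumes "x - w + 1 = 0" "y - w + 1 = 0"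
  shows "x = y"
proof -
  have "x = w - 1" using assms(1) by (simp add: algebra_simps eq_neg_iff_add_eq_0[symmetric])
  moreover have "y = w - 1" using assms(2) by (simp add: algebra_simps eq_neg_iff_add_eq_0[symmetric])
  ultimately show ?thesis by simp
qed

lemma lin_helper2:
  fixes u v G G0 g g0 :: "'a::field"
  assumes "u * G - v * g = u * G0 - v * g0"
  shows "u * (G - G0) = v * (g - g0)"
  using assms by (simp add: algebra_simps)

theorem proposition4p2:
  fixes p e q n j k :: nat and a X :: "'a::alg_closed_field"
  assumes "prime p" and "e > 0" and "q = p ^ e" and "CHAR('a) = p"
    and "1 \<le> j" and "j < n" and "coprime n j" and "k = n - j"
    and "a \<noteq> 0" and "X ^ (q ^ k - 1) = a"
  shows "(\<forall>g::'a. (1 / a) * g ^ (q ^ k) - (1 / a ^ (q ^ j)) * g - a ^ (q ^ n - 1) + 1 = 0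
            \<longleftrightarrow> (\<exists>c \<in> Fq_sub q k. g = (X ^ (q ^ n - 1) + c) / X ^ (q ^ j - 1)))
       \<and> (\<forall>c \<in> Fq_sub q k.
            - (a ^ (q ^ n)) + a + ((X ^ (q ^ n - 1) + c) / X ^ (q ^ j - 1)) ^ (q ^ k)
              = (X ^ (q ^ n - 1) + c) / X ^ (q ^ n - q ^ k))"
proof -
  define K where "K = q ^ k"
  define J where "J = q ^ j"
  define N where "N = q ^ n"
  have p2: "p \<ge> 2" using assms(1) by (rule prime_ge_2_nat)
  have "p ^ 1 \<le> p ^ e" using p2 assms(2) by (intro power_increasing) auto
  then have q2: "q \<ge> 2" using p2 assms(3) by simp
  have "k \<ge> 1" using assms by auto
  have "n = j + k" using assms(6,8) by simp
  then have NJK: "N = J * K" unfolding N_def J_def K_def by (simp only: power_add)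
  have "q ^ 1 \<le> q ^ k" using q2 \<open>k \<ge> 1\<close> by (intro power_increasing) auto
  then have K1: "K \<ge> 2" unfolding K_def using q2 by simp
  have J1: "J \<ge> 1" unfolding J_def using q2 by simp
  obtain J' where JK1: "J = Suc J'" using J1 by (cases J) auto
  obtain K' where JK2: "K = Suc (Suc K')" using K1 by (cases K; cases "K - 1") auto
  note JK = JK1 JK2
  have Kp: "K = p ^ (e * k)" unfolding K_def assms(3) by (simp only: power_mult)
  note frob = frob_gen[OF assms(1,4) Kp]
  have X0: "X \<noteq> 0"
  proof
    assume "X = 0"
    then have "a = 0" using assms(10) JK2 unfolding K_def[symmetric] by simp
    then show False using assms(9) by simp
  qed
  have aX: "a = X ^ (K - 1)" using assms(10) K_def by simp
  have ex1: "(J - 1) * K = N - K" unfolding NJK JK by (simp add: algebra_simps)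
  have ex2: "(K - 1) * J = N - J" unfolding NJK JK by (simp add: algebra_simps)
  have ex3: "(N - K) + (K - 1) = N - 1" unfolding NJK JK by (simp add: algebra_simps)
  have ex4: "(N - J) + (J - 1) = N - 1" unfolding NJK JK by (simp add: algebra_simps)
  have ex5: "(K - 1) * (N - 1) + (N - 1) = (N - 1) * K" unfolding NJK JK by (simp add: algebra_simps)
  have ex6: "(K - 1) * N + (N - K) = (N - 1) * K" unfolding NJK JK by (simp add: algebra_simps)
  define A where "A = X ^ (N - 1)"
  define B where "B = X ^ (J - 1)"
  define D where "D = X ^ (N - K)"
  define E where "E = X ^ (N - J)"
  define F where "F = X ^ ((N - 1) * K)"
  have B0: "B \<noteq> 0" "D \<noteq> 0" "E \<noteq> 0" "a \<noteq> 0" using X0 assms(9) by (auto simp: B_def D_def E_def)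
  have r1: "B ^ K = D" unfolding B_def D_def by (simp only: power_mult[symmetric] ex1)
  have r2: "a ^ J = E" unfolding aX E_def by (simp only: power_mult[symmetric] ex2)
  have r3: "D * a = A" unfolding aX D_def A_def by (simp only: power_add[symmetric] ex3)
  have r4: "E * B = A" unfolding E_def B_def A_def by (simp only: power_add[symmetric] ex4)
  have r5: "a ^ (N - 1) * A = F" unfolding aX A_def F_def
    by (simp only: power_mult[symmetric] power_add[symmetric] ex5)
  have r6: "a ^ N * D = F" unfolding aX D_def F_def
    by (simp only: power_mult[symmetric] power_add[symmetric] ex6)
  have r7: "A ^ K = F" unfolding A_def F_def by (simp only: power_mult[symmetric])
  have Fq: "c \<in> Fq_sub q k \<longleftrightarrow> c ^ K = c" for c :: 'a by (simp add: Fq_sub_def K_def)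
  have g0K: "((A + c) / B) ^ K = (F + c) / D" if "c ^ K = c" for c
    by (simp add: power_divide frob that r1 r7)
  have sol: "(1 / a) * ((A + c) / B) ^ K - (1 / a ^ J) * ((A + c) / B) - a ^ (N - 1) + 1 = 0"
    if "c ^ K = c" for c
  proof -
    have "(1 / a) * ((A + c) / B) ^ K = (F + c) / (D * a)" unfolding g0K[OF that]
      by (simp add: mult.commute)
    also have "\<dots> = (F + c) / A" using r3 by simp
    finally have e1: "(1 / a) * ((A + c) / B) ^ K = (F + c) / A" .
    have e2: "(1 / a ^ J) * ((A + c) / B) = (A + c) / A" using r2 r4
      by (simp add: mult.commute)
    have A0: "A \<noteq> 0" using r3 B0 by auto
    have e3: "a ^ (N - 1) = F / A" using r5 A0 by (simp add: eq_divide_eq mult.commute)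
    show ?thesis unfolding e1 e2 e3 using A0 by (simp add: field_simps)
  qed
  have part2: "- (a ^ N) + a + ((A + c) / B) ^ K = (A + c) / D" if "c ^ K = c" for c
    unfolding g0K[OF that] using r6 r3 B0 by (simp add: field_simps)
  have part1: "(1 / a) * g ^ K - (1 / a ^ J) * g - a ^ (N - 1) + 1 = 0
       \<longleftrightarrow> (\<exists>c. c ^ K = c \<and> g = (A + c) / B)" for g
  proof
    assume H: "(1 / a) * g ^ K - (1 / a ^ J) * g - a ^ (N - 1) + 1 = 0"
    define d where "d = g - A / B"
    have s0: "(1 / a) * (A / B) ^ K - (1 / a ^ J) * (A / B) - a ^ (N - 1) + 1 = 0"
      using sol[of 0] K1 by simp
    have "(1 / a) * d ^ K = (1 / a ^ J) * d"
      unfolding d_def frob by (rule lin_helper2, rule lin_helper[OF H s0])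
    then have dK: "d ^ K = a * d / E" using B0 r2 by (simp add: field_simps)
    define c where "c = d * B"
    have "c ^ K = c"
    proof -
      have "c ^ K = a * d / E * D" unfolding c_def by (simp add: power_mult_distrib dK r1)
      also have "\<dots> = d * A / E" using r3 by (simp add: algebra_simps)
      also have "\<dots> = c" unfolding c_def using r4[symmetric] B0 by (simp add: field_simps)
      finally show ?thesis .
    qed
    moreover have "g = (A + c) / B" unfolding c_def d_def using B0 by (simp add: field_simps)
    ultimately show "\<exists>c. c ^ K = c \<and> g = (A + c) / B" by blast
  next
    assume "\<exists>c. c ^ K = c \<and> g = (A + c) / B"
    then show "(1 / a) * g ^ K - (1 / a ^ J) * g - a ^ (N - 1) + 1 = 0" using sol by blast
  qed
  have Fq': "(\<exists>c\<in>Fq_sub q k. P c) \<longleftrightarrow> (\<exists>c. c ^ K = c \<and> P c)" for P :: "'a \<Rightarrow> bool"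
    using Fq by blast
  show ?thesis
    unfolding K_def[symmetric] J_def[symmetric] N_def[symmetric]
      A_def[symmetric] B_def[symmetric] D_def[symmetric] Fq'
  proof (intro conjI allI ballI)
    fix g show "(1 / a) * g ^ K - (1 / a ^ J) * g - a ^ (N - 1) + 1 = 0
       \<longleftrightarrow> (\<exists>c. c ^ K = c \<and> g = (A + c) / B)" by (rule part1)
  next
    fix c :: 'a assume "c \<in> Fq_sub q k"
    then show "- (a ^ N) + a + ((A + c) / B) ^ K = (A + c) / D" using Fq part2 by blast
  qed
qed

end
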